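(* Let $\Delta>1$ be a constant such that every $\Delta$-extensible map $g\colon W\to V$ satisfies $\sup_{x,y\in W}\frac{Dg(x)}{Dg(y)}\le2$. Let $W,V$ be open intervals and $g\colon W\to V$ a $C^2$ surjective diffeomorphism with $|Dg|^{-1/2}$ convex, which extends to a $C^2$ surjective diffeomorphism $g\colon\hat W\to\hat V$ with $|Dg|^{-1/2}$ convex, where $\hat W,\hat V$ are intervals and $\hat W$ compactly contains $W$. Suppose that each connected component of $\hat V\setminus V$ has length at least $10(1+\Delta)|V|$ and that $|V|>|\hat W|$. Then $|Dg|>5$ on $W$.
   Context: For $\delta>0$, a $C^2$ surjective diffeomorphism $g\colon W\to V$ between open intervals with $|Dg|^{-1/2}$ convex is called $\delta$-extensible if it extends to a $C^2$ surjective diffeomorphism $g\colon\hat W\to\hat V$ with $|Dg|^{-1/2}$ convex, where $\hat W,\hat V$ are intervals, $\hat W$ compactly contains $W$, and both connected components of $\hat V\setminus V$ have length at least $\delta|V|$. $|\cdot|$ denotes length. *)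

theory Defs
  imports "HOL-Analysis.Analysis"
begin

definition ilen :: "real set \<Rightarrow> ennreal" where
  "ilen I = emeasure lborel I"

definition open_interval :: "real set \<Rightarrow> bool" where
  "open_interval I \<longleftrightarrow> (\<exists>a b. a < b \<and> I = {a<..<b})"

definition has_C2_deriv :: "real set \<Rightarrow> (real \<Rightarrow> real) \<Rightarrow> (real \<Rightarrow> real) \<Rightarrow> bool" where
  "has_C2_deriv S f f' \<longleftrightarrow>
     (\<forall>x\<in>S. (f has_real_derivative f' x) (at x within S)) \<and>
     (\<exists>f''. (\<forall>x\<in>S. (f' has_real_derivative f'' x) (at x within S)) \<and> continuous_on S f'')"

definition C2_diffeo :: "real set \<Rightarrow> real set \<Rightarrow> (real \<Rightarrow> real) \<Rightarrow> (real \<Rightarrow> real) \<Rightarrow> bool" where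
  "C2_diffeo S T f Df \<longleftrightarrow> is_interval S \<and> is_interval T \<and> bij_betw f S T \<and>
     has_C2_deriv S f Df \<and> (\<exists>Dh. has_C2_deriv T (inv_into S f) Dh)"

definition inv_sqrt_convex :: "real set \<Rightarrow> (real \<Rightarrow> real) \<Rightarrow> bool" where
  "inv_sqrt_convex S Df \<longleftrightarrow> convex_on S (\<lambda>x. \<bar>Df x\<bar> powr (-1/2))"

definition extensible :: "real \<Rightarrow> (real \<Rightarrow> real) \<Rightarrow> (real \<Rightarrow> real) \<Rightarrow> real set \<Rightarrow> real set \<Rightarrow> bool" where
  "extensible \<delta> g Dg W V \<longleftrightarrow>
     open_interval W \<and> open_interval V \<and> C2_diffeo W V g Dg \<and> inv_sqrt_convex W Dg \<and>
     (\<exists>W' V' G DG. C2_diffeo W' V' G DG \<and> inv_sqrt_convex W' DG \<and>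
        (\<forall>x\<in>W. G x = g x) \<and> compact (closure W) \<and> closure W \<subseteq> W' \<and>
        card (components (V' - V)) = 2 \<and>
        (\<forall>C\<in>components (V' - V). ilen C \<ge> ennreal \<delta> * ilen V))"

end

theory Submission imports Defs begin

lemma has_C2_restrict:
  assumes "has_C2_deriv S f f'" "T \<subseteq> S" "\<And>x. x \<in> T \<Longrightarrow> f x = g x"
  shows "has_C2_deriv T g f'"
proof -
  obtain f'' where f1: "\<forall>x\<in>S. (f has_real_derivative f' x) (at x within S)"
    and f2: "\<forall>x\<in>S. (f' has_real_derivative f'' x) (at x within S)" and f3: "continuous_on S f''"
    using assms(1) unfolding has_C2_deriv_def by blast
  have "(g has_real_derivative f' x) (at x within T)" if "x \<in> T" for x
  proof (rule has_field_derivative_transform_within[where d=1 and f=f])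
    show "(f has_real_derivative f' x) (at x within T)"
      using DERIV_subset f1 that assms(2) by blast
  qed (use that assms(3) in auto)
  moreover have "\<forall>x\<in>T. (f' has_real_derivative f'' x) (at x within T)"
    using DERIV_subset f2 assms(2) by blast
  moreover have "continuous_on T f''" using continuous_on_subset f3 assms(2) by blast
  ultimately show ?thesis unfolding has_C2_deriv_def by blast
qed

lemma C2_diffeo_restrict:
  assumes "C2_diffeo S T f Df" "S0 \<subseteq> S" "is_interval S0" "is_interval T0" "bij_betw f S0 T0"
  shows "C2_diffeo S0 T0 f Df"
proof -
  obtain Dh where h: "has_C2_deriv T (inv_into S f) Dh" and d: "has_C2_deriv S f Df"
    and b: "bij_betw f S T"
    using assms(1) unfolding C2_diffeo_def by blast
  have inj: "inj_on f S" and fS: "f ` S = T" using b unfolding bij_betw_def by auto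
  have T0: "T0 = f ` S0" using assms(5) unfolding bij_betw_def by auto
  have "T0 \<subseteq> T" using T0 fS assms(2) by blast
  moreover have "inv_into S f y = inv_into S0 f y" if yT0: "y \<in> T0" for y
  proof -
    obtain x where x: "x \<in> S0" "y = f x" using T0 yT0 by blast
    have i0: "inj_on f S0" using inj assms(2) inj_on_subset by blast
    show ?thesis using x inv_into_f_f[OF inj] inv_into_f_f[OF i0] assms(2) by auto
  qed
  ultimately have "has_C2_deriv T0 (inv_into S0 f) Dh"
    using has_C2_restrict[OF h] by blast
  moreover have "has_C2_deriv S0 f Df" using has_C2_restrict[OF d assms(2)] by blast
  ultimately show ?thesis using assms(3-5) unfolding C2_diffeo_def by (intro conjI exI)
qed

lemma C2_cont:
  assumes "has_C2_deriv S f f'"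
  shows "continuous_on S f" "continuous_on S f'"
proof -
  obtain f'' where f1: "\<forall>x\<in>S. (f has_real_derivative f' x) (at x within S)"
    and f2: "\<forall>x\<in>S. (f' has_real_derivative f'' x) (at x within S)"
    using assms(1) unfolding has_C2_deriv_def by blast
  show "continuous_on S f" unfolding continuous_on_eq_continuous_within
    using f1 DERIV_continuous by blast
  show "continuous_on S f'" unfolding continuous_on_eq_continuous_within
    using f2 DERIV_continuous by blast
qed

lemma preimage_interval:
  fixes g :: "real \<Rightarrow> real"
  assumes "is_interval W" "continuous_on W g" "inj_on g W" "u1 < u2" "u1 \<in> g ` W" "u2 \<in> g ` W"
  shows "\<exists>p q. p < q \<and> p \<in> W \<and> q \<in> W \<and> {x\<in>W. g x \<in> {u1<..<u2}} = {p<..<q} \<and> {g p, g q} = {u1, u2}"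
proof -
  obtain p0 where p0: "p0 \<in> W" "g p0 = u1" using assms(5) by blast
  obtain q0 where q0: "q0 \<in> W" "g q0 = u2" using assms(6) by blast
  have iv: "\<And>x y z. x \<in> W \<Longrightarrow> z \<in> W \<Longrightarrow> x \<le> y \<Longrightarrow> y \<le> z \<Longrightarrow> y \<in> W"
    using assms(1) unfolding is_interval_1 by blast
  have "strict_mono_on W g \<or> strict_antimono_on W g"
    using injective_eq_monotone_map assms(1-3) by blast
  then show ?thesis
  proof
    assume m: "strict_mono_on W g"
    have le: "g x < g y \<longleftrightarrow> x < y" if xy: "x \<in> W" "y \<in> W" for x y
    proof (intro iffI)
      assume h: "g x < g y"
      show "x < y"
      proof (rule ccontr)
        assume "\<not> x < y"
        then have "y < x \<or> y = x" by auto
        then show False using monotone_onD[OF m xy(2) xy(1)] h by auto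
      qed
    next
      assume "x < y"
      then show "g x < g y" using monotone_onD[OF m xy] by simp
    qed
    have "p0 < q0" using le p0 q0 assms(4) by auto
    moreover have "{x\<in>W. g x \<in> {u1<..<u2}} = {p0<..<q0}"
    proof (intro set_eqI iffI)
      fix x assume "x \<in> {x\<in>W. g x \<in> {u1<..<u2}}"
      then show "x \<in> {p0<..<q0}" using le p0 q0 by auto
    next
      fix x assume x: "x \<in> {p0<..<q0}"
      then have "x \<in> W" using iv[OF p0(1) q0(1)] by auto
      then show "x \<in> {x\<in>W. g x \<in> {u1<..<u2}}" using le p0 q0 x by auto
    qed
    ultimately show ?thesis using p0 q0 by blast
  next
    assume m: "strict_antimono_on W g"
    have le: "g x < g y \<longleftrightarrow> y < x" if xy: "x \<in> W" "y \<in> W" for x y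
    proof (intro iffI)
      assume h: "g x < g y"
      show "y < x"
      proof (rule ccontr)
        assume "\<not> y < x"
        then have "x < y \<or> y = x" by auto
        then show False using monotone_onD[OF m xy(1) xy(2)] h by auto
      qed
    next
      assume "y < x"
      then show "g x < g y" using monotone_onD[OF m xy(2) xy(1)] by simp
    qed
    have "q0 < p0" using le p0 q0 assms(4) by auto
    moreover have "{x\<in>W. g x \<in> {u1<..<u2}} = {q0<..<p0}"
    proof (intro set_eqI iffI)
      fix x assume "x \<in> {x\<in>W. g x \<in> {u1<..<u2}}"
      then show "x \<in> {q0<..<p0}" using le p0 q0 by auto
    next
      fix x assume x: "x \<in> {q0<..<p0}"
      then have "x \<in> W" using iv[OF q0(1) p0(1)] by auto
      then show "x \<in> {x\<in>W. g x \<in> {u1<..<u2}}" using le p0 q0 x by auto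
    qed
    ultimately show ?thesis using p0 q0 by blast
  qed
qed

lemma comp_left:
  fixes V' :: "real set"
  assumes "is_interval V'" "a < b" "a \<in> V'"
  shows "V' \<inter> {..a} \<in> components (V' - {a<..<b})"
  unfolding in_components_maximal
proof (intro conjI allI impI)
  show "V' \<inter> {..a} \<noteq> {}" using assms by auto
  show "V' \<inter> {..a} \<subseteq> V' - {a<..<b}" by auto
  show "connected (V' \<inter> {..a})"
    using assms(1) is_interval_connected_1 is_interval_Int is_interval_ic by blast
  fix D assume D: "D \<noteq> {} \<and> V' \<inter> {..a} \<subseteq> D \<and> D \<subseteq> V' - {a<..<b} \<and> connected D"
  have aD: "a \<in> D" using D assms by auto
  have "D \<subseteq> {..a}"
  proof
    fix y assume y: "y \<in> D"
    show "y \<in> {..a}"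
    proof (rule ccontr)
      assume "y \<notin> {..a}"
      then have "a < y" by auto
      moreover have "is_interval D" using D is_interval_connected_1 by blast
      moreover have "a \<le> (a + min y b)/2" "(a + min y b)/2 \<le> y" using \<open>a < y\<close> assms(2) by auto
      ultimately have "(a + min y b)/2 \<in> D" using aD y unfolding is_interval_1 by blast
      moreover have "y \<ge> b" using y D \<open>a < y\<close> by auto
      ultimately show False using D assms(2) by auto
    qed
  qed
  then show "D = V' \<inter> {..a}" using D by auto
qed

lemma comp_right:
  fixes V' :: "real set"
  assumes "is_interval V'" "a < b" "b \<in> V'"
  shows "V' \<inter> {b..} \<in> components (V' - {a<..<b})"
  unfolding in_components_maximal
proof (intro conjI allI impI)
  show "V' \<inter> {b..} \<noteq> {}" using assms by auto
  show "V' \<inter> {b..} \<subseteq> V' - {a<..<b}" by auto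
  show "connected (V' \<inter> {b..})"
    using assms(1) is_interval_connected_1 is_interval_Int is_interval_ci by blast
  fix D assume D: "D \<noteq> {} \<and> V' \<inter> {b..} \<subseteq> D \<and> D \<subseteq> V' - {a<..<b} \<and> connected D"
  have aD: "b \<in> D" using D assms by auto
  have "D \<subseteq> {b..}"
  proof
    fix y assume y: "y \<in> D"
    show "y \<in> {b..}"
    proof (rule ccontr)
      assume "y \<notin> {b..}"
      then have "y < b" by auto
      moreover have "is_interval D" using D is_interval_connected_1 by blast
      moreover have "(b + max y a)/2 \<le> b" "y \<le> (b + max y a)/2" using \<open>y < b\<close> assms(2) by auto
      ultimately have "(b + max y a)/2 \<in> D" using aD y unfolding is_interval_1 by blast
      moreover have "y \<le> a" using y D \<open>y < b\<close> by auto
      ultimately show False using D assms(2) by auto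
    qed
  qed
  then show "D = V' \<inter> {b..}" using D by auto
qed

lemma comps_explicit:
  fixes c u1 u2 d :: real
  assumes "c < u1" "u1 < u2" "u2 < d"
  shows "components ({c<..<d} - {u1<..<u2}) = {{c<..u1}, {u2..<d}}"
proof -
  have A: "{c<..u1} \<in> components ({c<..<d} - {u1<..<u2})"
  proof -
    have "{c<..<d} \<inter> {..u1} = {c<..u1}" using assms by auto
    then show ?thesis using comp_left[of "{c<..<d}" u1 u2] assms by auto
  qed
  have B: "{u2..<d} \<in> components ({c<..<d} - {u1<..<u2})"
  proof -
    have "{c<..<d} \<inter> {u2..} = {u2..<d}" using assms by auto
    then show ?thesis using comp_right[of "{c<..<d}" u1 u2] assms by auto
  qed
  show ?thesis
  proof
    show "components ({c<..<d} - {u1<..<u2}) \<subseteq> {{c<..u1}, {u2..<d}}"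
    proof
      fix C assume C: "C \<in> components ({c<..<d} - {u1<..<u2})"
      then obtain x where x: "x \<in> C" using in_components_nonempty by blast
      have "x \<in> {c<..u1} \<or> x \<in> {u2..<d}" using x C in_components_subset by fastforce
      then show "C \<in> {{c<..u1}, {u2..<d}}"
        using components_nonoverlap[OF C A] components_nonoverlap[OF C B] x by blast
    qed
  qed (use A B in auto)
qed


lemma ivt_zero:
  fixes f :: "real \<Rightarrow> real"
  assumes "s \<le> t" "continuous_on {s..t} f" "f s * f t < 0"
  shows "\<exists>z\<in>{s..t}. f z = 0"
proof (cases "f s < 0")
  case True
  then have "f t > 0" using assms(3) by (simp add: mult_less_0_iff)
  then show ?thesis using IVT'[of f s 0 t] True assms by auto
next
  case False
  then have "f s > 0" "f t < 0" using assms(3) by (auto simp add: mult_less_0_iff)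
  then show ?thesis using IVT2'[of f t 0 s] assms by auto
qed

lemma Ioo_interval: "is_interval {p<..<q::real}"
  unfolding is_interval_1 by auto

lemma preimage_img:
  assumes "S \<subseteq> g ` W'"
  shows "g ` {x\<in>W'. g x \<in> S} = S"
  using assms by auto

theorem mainTheorem4:
  fixes \<Delta> :: real and g Dg :: "real \<Rightarrow> real" and W V W' V' :: "real set"
  assumes "\<Delta> > 1"
    and "\<forall>h Dh W0 V0. extensible \<Delta> h Dh W0 V0 \<longrightarrow> (\<forall>x\<in>W0. \<forall>y\<in>W0. Dh x / Dh y \<le> 2)"
    and "open_interval W" and "open_interval V"
    and "C2_diffeo W V g Dg" and "inv_sqrt_convex W Dg"
    and "C2_diffeo W' V' g Dg" and "inv_sqrt_convex W' Dg"
    and "compact (closure W)" and "closure W \<subseteq> W'"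
    and "\<forall>C\<in>components (V' - V). ilen C \<ge> ennreal (10 * (1 + \<Delta>)) * ilen V"
    and "ilen V > ilen W'"
  shows "\<forall>x\<in>W. \<bar>Dg x\<bar> > 5"
proof -
  obtain w1 w2 where w: "w1 < w2" "W = {w1<..<w2}" using assms(3) open_interval_def by blast
  obtain a b where ab: "a < b" "V = {a<..<b}" using assms(4) open_interval_def by blast
  define L where "L = b - a"
  have L0: "L > 0" using ab L_def by auto
  have iW': "is_interval W'" and iV': "is_interval V'" and bij: "bij_betw g W' V'"
    and dg: "has_C2_deriv W' g Dg"
    using assms(7) unfolding C2_diffeo_def by auto
  obtain Dh where dh: "has_C2_deriv V' (inv_into W' g) Dh"
    using assms(7) unfolding C2_diffeo_def by auto
  have inj: "inj_on g W'" and img: "g ` W' = V'" using bij unfolding bij_betw_def by auto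
  have contg: "continuous_on W' g" and contDg: "continuous_on W' Dg" using C2_cont[OF dg] by auto
  have gW: "g ` W = V" using assms(5) unfolding C2_diffeo_def bij_betw_def by auto
  have clW: "closure W = {w1..w2}" using w by simp
  have w1W': "w1 \<in> W'" and w2W': "w2 \<in> W'" using assms(10) clW w(1) by auto
  have gcl: "g ` {w1..w2} \<subseteq> {a..b}"
  proof -
    have "g ` closure W \<subseteq> {a..b}"
    proof (rule image_closure_subset)
      show "continuous_on (closure W) g" using contg assms(10) continuous_on_subset by blast
      show "g ` W \<subseteq> {a..b}" using gW ab by auto
    qed simp
    then show ?thesis using clW by simp
  qed
  have WW': "W \<subseteq> W'" using assms(10) closure_subset by blast
  have nV: "g w \<notin> V" if "w \<in> W'" "w \<notin> W" for w
  proof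
    assume "g w \<in> V"
    then obtain x where "x \<in> W" "g x = g w" using gW by force
    then have "x = w" using inj_onD[OF inj \<open>g x = g w\<close>] WW' that(1) by blast
    then show False using \<open>x \<in> W\<close> that by simp
  qed
  have "w1 \<in> {w1..w2}" "w2 \<in> {w1..w2}" using w(1) by auto
  then have "g w1 \<in> {a..b}" "g w2 \<in> {a..b}" using gcl by blast+
  then have g1: "g w1 \<in> {a,b}" and g2: "g w2 \<in> {a,b}"
    using nV[OF w1W'] nV[OF w2W'] w ab by auto
  have g12: "g w1 \<noteq> g w2" using inj_onD[OF inj _ w1W' w2W'] w(1) by auto
  have aV': "a \<in> V'" and bV': "b \<in> V'" using g1 g2 g12 w1W' w2W' img by auto
  have ivV: "\<And>x y z. x \<in> V' \<Longrightarrow> z \<in> V' \<Longrightarrow> x \<le> y \<Longrightarrow> y \<le> z \<Longrightarrow> y \<in> V'"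
    using iV' unfolding is_interval_1 by blast
  have ivW: "\<And>x y z. x \<in> W' \<Longrightarrow> z \<in> W' \<Longrightarrow> x \<le> y \<Longrightarrow> y \<le> z \<Longrightarrow> y \<in> W'"
    using iW' unfolding is_interval_1 by blast
  have hV: "ilen V = ennreal L" unfolding ilen_def ab L_def using ab by simp
  define M where "M = 9/2 * L + 10 * \<Delta> * L"
  have DL: "\<Delta> * L > 0" using L0 assms(1) by simp
  have MK: "M < 10 * (1 + \<Delta>) * L" using L0 DL unfolding M_def by (simp add: algebra_simps)
  have M0: "M \<ge> 0" using L0 DL unfolding M_def by (simp add: algebra_simps)
  have bigK: "ennreal (10 * (1 + \<Delta>)) * ilen V = ennreal (10 * (1 + \<Delta>) * L)"
    using hV L0 assms(1) by (simp add: ennreal_mult)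
  have lessK: "ennreal M < ennreal (10 * (1 + \<Delta>) * L)"
    using MK M0 ennreal_less_iff by blast
  have cV': "a - M \<in> V'"
  proof (rule ccontr)
    assume nc: "a - M \<notin> V'"
    have C: "V' \<inter> {..a} \<in> components (V' - V)" using comp_left[OF iV' ab(1) aV'] ab by simp
    have sub: "V' \<inter> {..a} \<subseteq> {a - M<..a}"
    proof
      fix y assume y: "y \<in> V' \<inter> {..a}"
      have "\<not> y \<le> a - M"
      proof
        assume "y \<le> a - M"
        moreover have "a - M \<le> a" using M0 by simp
        ultimately have "a - M \<in> V'" using ivV y aV' by blast
        then show False using nc by blast
      qed
      then show "y \<in> {a - M<..a}" using y by auto
    qed
    have "ilen (V' \<inter> {..a}) \<le> ennreal M"
      unfolding ilen_def using emeasure_mono[OF sub, of lborel] M0 by simp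
    moreover have "ilen (V' \<inter> {..a}) \<ge> ennreal (10 * (1 + \<Delta>) * L)"
      using assms(11) C bigK by metis
    ultimately show False using lessK by simp
  qed
  have dV': "b + M \<in> V'"
  proof (rule ccontr)
    assume nc: "b + M \<notin> V'"
    have C: "V' \<inter> {b..} \<in> components (V' - V)" using comp_right[OF iV' ab(1) bV'] ab by simp
    have sub: "V' \<inter> {b..} \<subseteq> {b..<b + M}"
    proof
      fix y assume y: "y \<in> V' \<inter> {b..}"
      have "\<not> y \<ge> b + M"
      proof
        assume "y \<ge> b + M"
        moreover have "b \<le> b + M" using M0 by simp
        ultimately have "b + M \<in> V'" using ivV y bV' by blast
        then show False using nc by blast
      qed
      then show "y \<in> {b..<b + M}" using y by auto
    qed
    have "ilen (V' \<inter> {b..}) \<le> ennreal M"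
      unfolding ilen_def using emeasure_mono[OF sub, of lborel] M0 by simp
    moreover have "ilen (V' \<inter> {b..}) \<ge> ennreal (10 * (1 + \<Delta>) * L)"
      using assms(11) C bigK by metis
    ultimately show False using lessK by simp
  qed
  define c where "c = a - M"
  define d where "d = b + M"
  define u1 where "u1 = a - 9/2 * L"
  define u2 where "u2 = b + 9/2 * L"
  have ord: "c < u1" "u1 < a" "b < u2" "u2 < d" "u1 < u2"
    using L0 assms(1) ab unfolding c_def d_def u1_def u2_def M_def by auto
  have cV'': "c \<in> V'" "d \<in> V'" using cV' dV' c_def d_def by auto
  have uV': "u1 \<in> V'" "u2 \<in> V'" using ivV[OF cV''(1) aV', of u1] ivV[OF bV' cV''(2), of u2] ord by auto
  have UV'': "{u1<..<u2} \<subseteq> {c<..<d}" using ord by auto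
  have V''V': "{c<..<d} \<subseteq> V'" using ivV[OF cV''(1) cV''(2)] by auto
  obtain p q where pq: "p < q" "p \<in> W'" "q \<in> W'" "{x\<in>W'. g x \<in> {u1<..<u2}} = {p<..<q}"
    "{g p, g q} = {u1, u2}"
    using preimage_interval[OF iW' contg inj ord(5)] uV' img by blast
  obtain p2 q2 where pq2: "p2 < q2" "{x\<in>W'. g x \<in> {c<..<d}} = {p2<..<q2}"
    using preimage_interval[OF iW' contg inj, of c d] ord cV'' img by auto
  have W0W': "{p<..<q} \<subseteq> W'" using pq(4) by blast
  have W2W': "{p2<..<q2} \<subseteq> W'" using pq2(2) by blast
  have s0: "{u1<..<u2} \<subseteq> g ` W'" using UV'' V''V' img by simp
  have s2: "{c<..<d} \<subseteq> g ` W'" using V''V' img by simp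
  have i0: "g ` {p<..<q} = {u1<..<u2}" using preimage_img[OF s0] pq(4) by simp
  have i2: "g ` {p2<..<q2} = {c<..<d}" using preimage_img[OF s2] pq2(2) by simp
  have bij0: "bij_betw g {p<..<q} {u1<..<u2}"
    unfolding bij_betw_def using inj_on_subset[OF inj W0W'] i0 by blast
  have bij2: "bij_betw g {p2<..<q2} {c<..<d}"
    unfolding bij_betw_def using inj_on_subset[OF inj W2W'] i2 by blast
  have cw: "inv_sqrt_convex {s<..<t} Dg" if "{s<..<t} \<subseteq> W'" for s t
  proof -
    have "convex {s<..<t}" by simp
    then show ?thesis
      using convex_on_subset[OF assms(8)[unfolded inv_sqrt_convex_def] that]
      unfolding inv_sqrt_convex_def by blast
  qed
  have pW2: "p \<in> {p2<..<q2}" "q \<in> {p2<..<q2}"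
  proof -
    have "g p \<in> {c<..<d}" "g q \<in> {c<..<d}" using pq(5) ord by (auto simp: doubleton_eq_iff)
    then show "p \<in> {p2<..<q2}" "q \<in> {p2<..<q2}" using pq(2,3) pq2(2) by blast+
  qed
  have clsub: "closure {p<..<q} \<subseteq> {p2<..<q2}" using pq(1) pW2 by auto
  have comps: "components ({c<..<d} - {u1<..<u2}) = {{c<..u1}, {u2..<d}}"
    using comps_explicit ord by blast
  have neq: "{c<..u1} \<noteq> {u2..<d}"
  proof -
    have "u1 \<in> {c<..u1}" "u1 \<notin> {u2..<d}" using ord by auto
    then show ?thesis by blast
  qed
  have hU: "ilen {u1<..<u2} = ennreal (10 * L)"
    unfolding ilen_def using ord by (simp add: u1_def u2_def L_def)
  have hl: "ilen {c<..u1} = ennreal (10 * \<Delta> * L)"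
    unfolding ilen_def using ord by (simp add: u1_def c_def M_def)
  have hr: "ilen {u2..<d} = ennreal (10 * \<Delta> * L)"
    unfolding ilen_def using ord by (simp add: u2_def d_def M_def)
  have dl: "ennreal \<Delta> * ilen {u1<..<u2} = ennreal (10 * \<Delta> * L)"
    using hU assms(1) L0 by (simp add: ennreal_mult[symmetric] mult.commute mult.left_commute)
  have ext: "extensible \<Delta> g Dg {p<..<q} {u1<..<u2}"
    unfolding extensible_def
  proof (intro conjI)
    show "open_interval {p<..<q}" using pq(1) open_interval_def by blast
    show "open_interval {u1<..<u2}" using ord(5) open_interval_def by blast
    show "C2_diffeo {p<..<q} {u1<..<u2} g Dg"
      using C2_diffeo_restrict[OF assms(7) W0W' Ioo_interval Ioo_interval bij0] .
    show "inv_sqrt_convex {p<..<q} Dg" using cw W0W' by blast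
    show "\<exists>W' V' G DG. C2_diffeo W' V' G DG \<and> inv_sqrt_convex W' DG \<and>
        (\<forall>x\<in>{p<..<q}. G x = g x) \<and> compact (closure {p<..<q}) \<and> closure {p<..<q} \<subseteq> W' \<and>
        card (components (V' - {u1<..<u2})) = 2 \<and>
        (\<forall>C\<in>components (V' - {u1<..<u2}). ilen C \<ge> ennreal \<Delta> * ilen {u1<..<u2})"
    proof (rule exI[of _ "{p2<..<q2}"], rule exI[of _ "{c<..<d}"], rule exI[of _ g], rule exI[of _ Dg],
        intro conjI)
      show "C2_diffeo {p2<..<q2} {c<..<d} g Dg"
        using C2_diffeo_restrict[OF assms(7) W2W' Ioo_interval Ioo_interval bij2] .
      show "inv_sqrt_convex {p2<..<q2} Dg" using cw W2W' by blast
      show "\<forall>x\<in>{p<..<q}. g x = g x" by simp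
      show "compact (closure {p<..<q})" using pq(1) by simp
      show "closure {p<..<q} \<subseteq> {p2<..<q2}" using clsub .
      show "card (components ({c<..<d} - {u1<..<u2})) = 2" using comps neq by simp
      show "\<forall>C\<in>components ({c<..<d} - {u1<..<u2}). ennreal \<Delta> * ilen {u1<..<u2} \<le> ilen C"
        using comps hl hr dl by auto
    qed
  qed
  have R: "\<forall>x\<in>{p<..<q}. \<forall>y\<in>{p<..<q}. Dg x / Dg y \<le> 2" using assms(2) ext by blast
  obtain dg1 where dg1: "\<forall>x\<in>W'. (g has_real_derivative Dg x) (at x within W')"
    using dg unfolding has_C2_deriv_def by blast
  obtain dh1 where dh1: "\<forall>y\<in>V'. (inv_into W' g has_real_derivative Dh y) (at y within V')"
    using dh unfolding has_C2_deriv_def by blast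
  have nz: "Dg x \<noteq> 0" if x: "x \<in> {p<..<q}" for x
  proof -
    have xW': "x \<in> W'" using x W0W' by blast
    have gx: "g x \<in> {u1<..<u2}" using x pq(4) by blast
    have d1: "(g has_real_derivative Dg x) (at x)"
      using DERIV_subset[OF dg1[rule_format, OF xW'] W0W'] at_within_open[OF x open_greaterThanLessThan]
      by simp
    have sU: "{u1<..<u2} \<subseteq> V'" using UV'' V''V' by (rule subset_trans)
    have gV': "g x \<in> V'" using gx sU by blast
    have "(inv_into W' g has_real_derivative Dh (g x)) (at (g x) within V')" using dh1 gV' by blast
    then have "(inv_into W' g has_real_derivative Dh (g x)) (at (g x) within {u1<..<u2})"
      using DERIV_subset sU by blast
    then have d2: "(inv_into W' g has_real_derivative Dh (g x)) (at (g x))"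
      using at_within_open[OF gx open_greaterThanLessThan] by simp
    have d3: "((\<lambda>y. inv_into W' g (g y)) has_real_derivative Dh (g x) * Dg x) (at x)"
      using DERIV_chain2[OF d2 d1] .
    have d4: "((\<lambda>y. y) has_real_derivative Dh (g x) * Dg x) (at x)"
    proof (rule has_field_derivative_transform_within_open[OF d3 _ x])
      show "open {p<..<q}" by simp
      fix y assume "y \<in> {p<..<q}"
      then show "inv_into W' g (g y) = y" using W0W' inv_into_f_f[OF inj] by blast
    qed
    have "Dh (g x) * Dg x = 1" using DERIV_unique[OF d4 DERIV_ident] .
    then show ?thesis by auto
  qed
  have "\<exists>\<xi>\<in>{p<..<q}. g q - g p = (\<lambda>t. Dg \<xi> * t) (q - p)"
  proof (rule mvt_simple[OF pq(1)])
    fix x assume "p \<le> x" "x \<le> q"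
    then have xW': "x \<in> W'" using ivW[OF pq(2) pq(3)] by blast
    have sub: "{p..q} \<subseteq> W'" using ivW[OF pq(2) pq(3)] by auto
    have "(g has_real_derivative Dg x) (at x within {p..q})"
      using DERIV_subset[OF dg1[rule_format, OF xW'] sub] .
    then show "(g has_derivative (\<lambda>t. Dg x * t)) (at x within {p..q})"
      by (rule has_field_derivative_imp_has_derivative)
  qed
  then obtain \<xi> where xi: "\<xi> \<in> {p<..<q}" "g q - g p = Dg \<xi> * (q - p)" by auto
  have diff: "\<bar>g q - g p\<bar> = 10 * L"
    using pq(5) ord unfolding u1_def u2_def L_def by (auto simp: doubleton_eq_iff)
  have "ilen {p<..<q} \<le> ilen W'"
    unfolding ilen_def using emeasure_mono[OF W0W', of lborel] real_interval_borel_measurable[OF iW'] by simp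
  then have "ennreal (q - p) < ennreal L" using assms(12) hV pq(1) unfolding ilen_def by simp
  then have qpL: "q - p < L" using ennreal_less_iff pq(1) by simp
  have big: "\<bar>Dg \<xi>\<bar> > 10"
  proof (rule ccontr)
    assume "\<not> \<bar>Dg \<xi>\<bar> > 10"
    then have "\<bar>Dg \<xi>\<bar> \<le> 10" by simp
    then have "\<bar>Dg \<xi>\<bar> * (q - p) \<le> 10 * (q - p)" using pq(1) by (intro mult_right_mono) auto
    moreover have "\<bar>Dg \<xi>\<bar> * (q - p) = 10 * L" using diff xi(2) pq(1) by (simp add: abs_mult)
    ultimately show False using qpL by simp
  qed
  show ?thesis
  proof
    fix x assume xW: "x \<in> W"
    have "g x \<in> V" using xW gW by blast
    then have "g x \<in> {u1<..<u2}" using ab(2) ord(2,3) by auto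
    moreover have "x \<in> W'" using xW WW' by blast
    ultimately have x0: "x \<in> {p<..<q}" using pq(4) by blast
    have "Dg x * Dg \<xi> > 0"
    proof (rule ccontr)
      assume "\<not> Dg x * Dg \<xi> > 0"
      then have neg: "Dg (min x \<xi>) * Dg (max x \<xi>) < 0"
        using nz[OF x0] nz[OF xi(1)] by (cases "x \<le> \<xi>") (auto simp: mult.commute less_le)
      have sub: "{min x \<xi>..max x \<xi>} \<subseteq> {p<..<q}" using x0 xi(1) by auto
      have cc: "continuous_on {min x \<xi>..max x \<xi>} Dg"
        using continuous_on_subset[OF contDg] sub W0W' by blast
      have mm: "min x \<xi> \<le> max x \<xi>" by simp
      obtain z where "z \<in> {min x \<xi>..max x \<xi>}" "Dg z = 0"
        using ivt_zero[of "min x \<xi>" "max x \<xi>" Dg, OF mm cc neg] by blast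
      then show False using nz sub by blast
    qed
    then have pos: "Dg \<xi> / Dg x > 0" by (auto simp add: zero_less_divide_iff zero_less_mult_iff)
    have r: "Dg \<xi> / Dg x \<le> 2" using R x0 xi(1) by blast
    have "\<bar>Dg \<xi>\<bar> / \<bar>Dg x\<bar> = Dg \<xi> / Dg x"
      using abs_of_pos[OF pos] abs_divide[of "Dg \<xi>" "Dg x"] by simp
    then have "\<bar>Dg \<xi>\<bar> / \<bar>Dg x\<bar> \<le> 2" using r by simp
    moreover have "\<bar>Dg x\<bar> > 0" using nz[OF x0] by simp
    ultimately have "\<bar>Dg \<xi>\<bar> \<le> 2 * \<bar>Dg x\<bar>" by (simp add: pos_divide_le_eq mult.commute)
    then show "\<bar>Dg x\<bar> > 5" using big by simp
  qed
qed

end
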